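(* Let $\mathbf X=(X_1,\dots,X_d)$ be a random vector whose copula $C$ is in the domain of attraction of a multivariate extreme value distribution $G$, and suppose there is an index $\kappa\in\{1,\dots,d\}$ with $\omega(F_\kappa)=:\omega^*$ such that $\lim_{s\uparrow\omega^*}\frac{1-F_i(s)}{1-F_\kappa(s)}=\gamma_i\in[0,\infty)$ for all $1\le i\le d$. Let $p_k:=\lim_{s\uparrow\omega^*}P(N_s=k\mid N_s>0)$, $1\le k\le d$ (these limits exist under the stated assumptions). Put $I:=\{i\in\{1,\dots,d\}:\gamma_i=0\}$ and $m^*:=d-|I|$. Then $\sum_{k=m}^d p_k=0$ for every $m$ with $m^*<m\le d$.
   Context: $F_i$ is the distribution function of $X_i$; the copula $C$ of $\mathbf X$ is the distribution function on $[0,1]^d$ with uniform margins such that $\mathbf X$ has the law of $(F_1^{-1}(U_1),\dots,F_d^{-1}(U_d))$, $\mathbf U\sim C$, with $F^{-1}(q)=\inf\{t:F(t)\ge q\}$. $\omega(F)=\sup\{t:F(t)<1\}$. "$C$ is in the domain of attraction of $G$" means $C^n(1+x_1/n,\dots,1+x_d/n)\to G(\mathbf x)$ for all $\mathbf x\le\mathbf 0$. $N_s:=\sum_{i=1}^d 1_{(s,\infty)}(X_i)$. *)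

theory Defs
  imports "HOL-Probability.Probability"
begin

definition dfun :: "'a measure \<Rightarrow> ('a \<Rightarrow> real) \<Rightarrow> real \<Rightarrow> real" where
  "dfun M Y t = measure M {x \<in> space M. Y x \<le> t}"

definition gen_inverse :: "(real \<Rightarrow> real) \<Rightarrow> real \<Rightarrow> real" where
  "gen_inverse F q = Inf {t. F t \<ge> q}"

definition right_endpoint :: "(real \<Rightarrow> real) \<Rightarrow> ereal" where
  "right_endpoint F = Sup (ereal ` {t. F t < 1})"

definition upto :: "ereal \<Rightarrow> real filter" where
  "upto w = (if w = \<infinity> then at_top else at_left (real_of_ereal w))"

definition is_copula_of ::
  "'a measure \<Rightarrow> (nat \<Rightarrow> 'a \<Rightarrow> real) \<Rightarrow> nat \<Rightarrow> ((nat \<Rightarrow> real) \<Rightarrow> real) \<Rightarrow> bool" where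
  "is_copula_of M X d C \<longleftrightarrow>
    (\<exists>Q. prob_space Q \<and> sets Q = sets (PiM {1..d} (\<lambda>_. borel)) \<and>
       (\<forall>i\<in>{1..d}. \<forall>t. measure Q {v \<in> space Q. v i \<le> t} = max 0 (min 1 t)) \<and>
       (\<forall>u. C u = measure Q {v \<in> space Q. \<forall>i\<in>{1..d}. v i \<le> u i}) \<and>
       distr M (PiM {1..d} (\<lambda>_. borel)) (\<lambda>x. \<lambda>i\<in>{1..d}. X i x) =
       distr Q (PiM {1..d} (\<lambda>_. borel)) (\<lambda>v. \<lambda>i\<in>{1..d}. gen_inverse (dfun M (X i)) (v i)))"

definition is_std_mevd :: "nat \<Rightarrow> ((nat \<Rightarrow> real) \<Rightarrow> real) \<Rightarrow> bool" where
  "is_std_mevd d G \<longleftrightarrow>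
    (\<exists>P. prob_space P \<and> sets P = sets (PiM {1..d} (\<lambda>_. borel)) \<and>
       (\<forall>x. G x = measure P {v \<in> space P. \<forall>i\<in>{1..d}. v i \<le> x i})) \<and>
    (\<forall>i\<in>{1..d}. \<forall>t\<le>0. G (\<lambda>j. if j = i then t else 0) = exp t) \<and>
    (\<forall>x n. (\<forall>i\<in>{1..d}. x i \<le> 0) \<and> n \<ge> 1 \<longrightarrow> G (\<lambda>i. x i / real n) ^ n = G x)"

definition in_DoA :: "nat \<Rightarrow> ((nat \<Rightarrow> real) \<Rightarrow> real) \<Rightarrow> ((nat \<Rightarrow> real) \<Rightarrow> real) \<Rightarrow> bool" where
  "in_DoA d C G \<longleftrightarrow>
    (\<forall>x. (\<forall>i\<in>{1..d}. x i \<le> 0) \<longrightarrow>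
       (\<lambda>n. C (\<lambda>i. 1 + x i / real n) ^ n) \<longlonglongrightarrow> G x)"

definition exceed_count :: "(nat \<Rightarrow> 'a \<Rightarrow> real) \<Rightarrow> nat \<Rightarrow> real \<Rightarrow> 'a \<Rightarrow> nat" where
  "exceed_count X d s x = card {i \<in> {1..d}. X i x > s}"

definition cond_count_prob :: "'a measure \<Rightarrow> (nat \<Rightarrow> 'a \<Rightarrow> real) \<Rightarrow> nat \<Rightarrow> real \<Rightarrow> nat \<Rightarrow> real" where
  "cond_count_prob M X d s k =
     measure M {x \<in> space M. exceed_count X d s x = k \<and> exceed_count X d s x > 0} /
     measure M {x \<in> space M. exceed_count X d s x > 0}"

end

theory Submission
  imports Defs
begin

theorem lemma4p1:
  fixes M :: "'a measure" and X :: "nat \<Rightarrow> 'a \<Rightarrow> real" and d \<kappa> :: nat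
    and C G :: "(nat \<Rightarrow> real) \<Rightarrow> real" and \<gamma> :: "nat \<Rightarrow> real"
  assumes "prob_space M"
    and "\<And>i. i \<in> {1..d} \<Longrightarrow> X i \<in> borel_measurable M"
    and "is_copula_of M X d C"
    and "is_std_mevd d G"
    and "in_DoA d C G"
    and "\<kappa> \<in> {1..d}"
    and "\<And>i. i \<in> {1..d} \<Longrightarrow> \<gamma> i \<ge> 0"
    and "\<And>i. i \<in> {1..d} \<Longrightarrow>
           ((\<lambda>s. (1 - dfun M (X i) s) / (1 - dfun M (X \<kappa>) s)) \<longlongrightarrow> \<gamma> i)
             (upto (right_endpoint (dfun M (X \<kappa>))))"
  shows "\<forall>m. d - card {i \<in> {1..d}. \<gamma> i = 0} < m \<and> m \<le> d \<longrightarrow>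
           (\<Sum>k = m..d. Lim (upto (right_endpoint (dfun M (X \<kappa>))))
                              (\<lambda>s. cond_count_prob M X d s k)) = 0"
proof -
  interpret P: prob_space M by fact
  define F where "F = dfun M (X \<kappa>)"
  define w where "w = right_endpoint F"
  define L where "L = upto w"
  define I where "I = {i \<in> {1..d}. \<gamma> i = 0}"
  have kd: "\<kappa> \<in> {1..d}" by fact
  have Fmeas: "\<And>i t. i \<in> {1..d} \<Longrightarrow> {x \<in> space M. X i x \<le> t} \<in> sets M"
    using assms(2) by measurable
  have Gmeas: "\<And>i t. i \<in> {1..d} \<Longrightarrow> {x \<in> space M. X i x > t} \<in> sets M"
    using assms(2) by measurable
  have Fmono: "\<And>i s t. i\<in>{1..d} \<Longrightarrow> s \<le> t \<Longrightarrow> dfun M (X i) s \<le> dfun M (X i) t"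
    unfolding dfun_def by (rule P.finite_measure_mono) (auto intro: Fmeas)
  have compl: "\<And>i t. i\<in>{1..d} \<Longrightarrow> measure M {x\<in>space M. X i x > t} = 1 - dfun M (X i) t"
  proof -
    fix i t assume i: "i \<in> {1..d}"
    have "{x\<in>space M. X i x > t} = space M - {x \<in> space M. X i x \<le> t}" by auto
    then show "measure M {x\<in>space M. X i x > t} = 1 - dfun M (X i) t"
      using P.prob_compl[OF Fmeas[OF i, of t]] by (simp add: dfun_def)
  qed
  have notbot: "L \<noteq> bot" unfolding L_def upto_def by auto
  have wnm: "w \<noteq> -\<infinity>"
  proof
    assume "w = -\<infinity>"
    then have "{t. F t < 1} = {}" unfolding w_def right_endpoint_def
      by (auto simp: Sup_eq_MInfty)
    then have F1: "\<And>t. F t \<ge> 1" by (metis (mono_tags) empty_Collect_eq not_less)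
    interpret R: real_distribution "distr M borel (X \<kappa>)"
      using assms(2)[OF kd] by simp
    have cdfF: "cdf (distr M borel (X \<kappa>)) t = F t" for t
      unfolding cdf_def F_def dfun_def using assms(2)[OF kd]
      by (subst measure_distr) (auto intro!: arg_cong[where f="measure M"])
    have "eventually (\<lambda>t. cdf (distr M borel (X \<kappa>)) t < 1/2) at_bot"
      using R.cdf_lim_at_bot by (rule order_tendstoD) simp
    then obtain t where "cdf (distr M borel (X \<kappa>)) t < 1/2"
      by (metis eventually_at_bot_linorder order_refl)
    with F1[of t] cdfF[of t] show False by simp
  qed
  have below: "F s < 1" if "ereal s < w" for s
  proof -
    from that obtain t where "F t < 1" "s < t"
      unfolding w_def right_endpoint_def by (auto simp: less_Sup_iff)
    with Fmono[OF kd, of s t] show ?thesis unfolding F_def by simp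
  qed
  have evw: "eventually (\<lambda>s. ereal s < w) L"
  proof (cases w)
    case (real r)
    then show ?thesis unfolding L_def upto_def
      using eventually_at_left_real[of "r - 1" r] by (auto elim: eventually_mono)
  next
    case PInf
    then show ?thesis unfolding L_def upto_def by simp
  next
    case MInf with wnm show ?thesis by simp
  qed
  have Fpos: "eventually (\<lambda>s. F s < 1) L"
    using evw by (rule eventually_mono) (rule below)
  define g where "g s = (\<Sum>i\<in>I. (1 - dfun M (X i) s) / (1 - F s))" for s
  have g0: "(g \<longlongrightarrow> 0) L"
    unfolding g_def
  proof (rule tendsto_null_sum)
    fix i assume "i \<in> I"
    then show "((\<lambda>s. (1 - dfun M (X i) s) / (1 - F s)) \<longlongrightarrow> 0) L"
      using assms(8)[of i] unfolding I_def L_def w_def F_def by auto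
  qed
  have main: "((\<lambda>s. cond_count_prob M X d s k) \<longlongrightarrow> 0) L" if k: "d - card I < k" "k \<le> d" for k
  proof (rule tendsto_sandwich[OF _ _ tendsto_const g0])
    show "eventually (\<lambda>s. 0 \<le> cond_count_prob M X d s k) L"
      unfolding cond_count_prob_def by simp
    show "eventually (\<lambda>s. cond_count_prob M X d s k \<le> g s) L"
      using Fpos
    proof (rule eventually_mono)
      fix s assume Fs: "F s < 1"
      define A where "A = {x \<in> space M. exceed_count X d s x = k \<and> exceed_count X d s x > 0}"
      define D where "D = {x \<in> space M. exceed_count X d s x > 0}"
      define U where "U = (\<Union>i\<in>I. {x \<in> space M. X i x > s})"
      have fI: "finite I" unfolding I_def by simp
      have Isub: "I \<subseteq> {1..d}" unfolding I_def by auto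
      have AU: "A \<subseteq> U"
      proof
        fix x assume xA: "x \<in> A"
        define E where "E = {i \<in> {1..d}. X i x > s}"
        have cE: "card E = k" using xA unfolding A_def E_def exceed_count_def by simp
        show "x \<in> U"
        proof (rule ccontr)
          assume "x \<notin> U"
          then have "E \<subseteq> {1..d} - I" using xA unfolding U_def E_def A_def by auto
          then have "card E \<le> card ({1..d} - I)" by (intro card_mono) auto
          also have "\<dots> = d - card I" using Isub fI by (simp add: card_Diff_subset)
          finally show False using cE k by simp
        qed
      qed
      have Umeas: "U \<in> sets M" unfolding U_def using fI Isub Gmeas by blast
      have "measure M A \<le> measure M U" by (rule P.finite_measure_mono[OF AU Umeas])
      also have "\<dots> \<le> (\<Sum>i\<in>I. measure M {x \<in> space M. X i x > s})"
        unfolding U_def by (rule measure_UNION_le[OF fI]) (use Isub Gmeas in blast)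
      also have "\<dots> = (\<Sum>i\<in>I. 1 - dfun M (X i) s)"
        by (rule sum.cong) (use Isub compl in auto)
      finally have numle: "measure M A \<le> (\<Sum>i\<in>I. 1 - dfun M (X i) s)" .
      have Deq: "D = (\<Union>i\<in>{1..d}. {x \<in> space M. X i x > s})"
        unfolding D_def exceed_count_def by (auto simp: card_gt_0_iff)
      have Dmeas: "D \<in> sets M" unfolding Deq using Gmeas by blast
      have "{x \<in> space M. X \<kappa> x > s} \<subseteq> D" unfolding Deq using kd by blast
      then have "measure M {x \<in> space M. X \<kappa> x > s} \<le> measure M D"
        by (rule P.finite_measure_mono[OF _ Dmeas])
      then have Dge: "1 - F s \<le> measure M D" using compl[OF kd] unfolding F_def by simp
      have Dpos: "0 < 1 - F s" using Fs by simp
      have snn: "0 \<le> (\<Sum>i\<in>I. 1 - dfun M (X i) s)"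
        by (rule sum_nonneg) (use Isub compl in \<open>metis measure_nonneg subsetD\<close>)
      have "cond_count_prob M X d s k = measure M A / measure M D"
        unfolding cond_count_prob_def A_def D_def ..
      also have "\<dots> \<le> (\<Sum>i\<in>I. 1 - dfun M (X i) s) / measure M D"
        by (rule divide_right_mono[OF numle]) simp
      also have "\<dots> \<le> (\<Sum>i\<in>I. 1 - dfun M (X i) s) / (1 - F s)"
        by (rule divide_left_mono[OF Dge snn]) (use Dpos Dge in simp)
      also have "\<dots> = g s" unfolding g_def by (simp add: sum_divide_distrib)
      finally show "cond_count_prob M X d s k \<le> g s" .
    qed
  qed
  show ?thesis
  proof (intro allI impI)
    fix m assume m: "d - card {i \<in> {1..d}. \<gamma> i = 0} < m \<and> m \<le> d"
    have "Lim (upto (right_endpoint (dfun M (X \<kappa>)))) (\<lambda>s. cond_count_prob M X d s k) = 0"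
      if "k \<in> {m..d}" for k
      using tendsto_Lim[OF notbot main[of k]] that m
      unfolding L_def w_def F_def I_def by auto
    then show "(\<Sum>k = m..d. Lim (upto (right_endpoint (dfun M (X \<kappa>))))
                              (\<lambda>s. cond_count_prob M X d s k)) = 0" by simp
  qed
qed

end
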